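(* The abelian groups in $\mathcal{D}_1$ are exactly the cyclic groups of order $p^2$ with $p$ prime. The nonabelian groups in $\mathcal{D}_1$ are exactly the Frobenius groups of order $pq$ with $p,q$ primes.
   Context: All groups are finite. $\mathcal{D}(G)$ denotes the number of conjugacy classes of nontrivial subgroups $H$ of $G$ with $N_G(H)\neq H$; $\mathcal{D}_n$ is the family of finite groups $G$ with $\mathcal{D}(G)=n$. *)

theory Defs
  imports "HOL-Algebra.Algebra" "HOL-Computational_Algebra.Primes"
begin

definition subgroup_conj_class :: "('a, 'b) monoid_scheme \<Rightarrow> 'a set \<Rightarrow> 'a set set" where
  "subgroup_conj_class G H = {g <#\<^bsub>G\<^esub> H #>\<^bsub>G\<^esub> inv\<^bsub>G\<^esub> g | g. g \<in> carrier G}"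

definition D_count :: "('a, 'b) monoid_scheme \<Rightarrow> nat" where
  "D_count G = card (subgroup_conj_class G `
      {H. subgroup H G \<and> H \<noteq> {\<one>\<^bsub>G\<^esub>} \<and> normalizer G H \<noteq> H})"

definition frobenius_group :: "('a, 'b) monoid_scheme \<Rightarrow> bool" where
  "frobenius_group G \<longleftrightarrow> (\<exists>H. subgroup H G \<and> H \<noteq> {\<one>\<^bsub>G\<^esub>} \<and> H \<noteq> carrier G \<and>
      (\<forall>g \<in> carrier G - H. H \<inter> (g <#\<^bsub>G\<^esub> H #>\<^bsub>G\<^esub> inv\<^bsub>G\<^esub> g) = {\<one>\<^bsub>G\<^esub>}))"

end

theory Submission
  imports Defs
begin


context group begin

lemma conj_sub:
  assumes "g \<in> carrier G" "subgroup H G"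
  shows "subgroup (g <# H #> inv g) G"
  using subgroup_conjugation_is_surj1[of "inv g" H] assms by simp

lemma conj_image:
  assumes "g \<in> carrier G" "H \<subseteq> carrier G"
  shows "g <# H #> inv g = (\<lambda>h. g \<otimes> h \<otimes> inv g) ` H"
  unfolding l_coset_def r_coset_def by auto

lemma card_conj:
  assumes "g \<in> carrier G" "H \<subseteq> carrier G"
  shows "card (g <# H #> inv g) = card H"
proof -
  have "inj_on (\<lambda>h. g \<otimes> h \<otimes> inv g) H"
    by (rule inj_onI) (use assms in \<open>auto dest: conjugation_is_inj\<close>)
  then show ?thesis using conj_image[OF assms] by (simp add: card_image)
qed

lemma normalizer_eq:
  assumes "H \<subseteq> carrier G"
  shows "normalizer G H = {g \<in> carrier G. g <# H #> inv g = H}"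
  using assms unfolding normalizer_def stabilizer_def by auto

lemma conj_one:
  assumes "H \<subseteq> carrier G"
  shows "\<one> <# H #> inv \<one> = H"
  using assms by (simp add: lcos_mult_one coset_mult_one)

lemma self_in_conj_class:
  assumes "H \<subseteq> carrier G"
  shows "H \<in> subgroup_conj_class G H"
  unfolding subgroup_conj_class_def using conj_one[OF assms] by force

lemma normal_conj:
  assumes "H \<lhd> G" "g \<in> carrier G"
  shows "g <# H #> inv g = H"
proof -
  have "g <# H = H #> g" using assms by (simp add: normal.coset_eq)
  then have "g <# H #> inv g = H #> (g \<otimes> inv g)"
    using assms by (simp add: coset_mult_assoc normal_imp_subgroup subgroup.subset)
  then show ?thesis using assms by (simp add: coset_mult_one normal_imp_subgroup subgroup.subset)
qed

lemma normal_normalizer: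
  assumes "H \<lhd> G"
  shows "normalizer G H = carrier G"
  using normalizer_eq[of H] normal_conj[OF assms] assms
  by (auto simp: normal_imp_subgroup subgroup.subset)

lemma orbit_stab_conj:
  assumes "H \<subseteq> carrier G" "finite (carrier G)"
  shows "card (subgroup_conj_class G H) * card (normalizer G H) = order G"
proof -
  interpret A: group_action G "{H. H \<subseteq> carrier G}" "\<lambda>g. \<lambda>H \<in> {H. H \<subseteq> carrier G}. g <# H #> inv g"
    by (rule action_by_conjugation_on_power_set)
  have "orbit G (\<lambda>g. \<lambda>H \<in> {H. H \<subseteq> carrier G}. g <# H #> inv g) H = subgroup_conj_class G H"
    unfolding orbit_def subgroup_conj_class_def using assms by auto
  then show ?thesis
    using A.orbit_stabilizer_theorem[of H] assms unfolding normalizer_def by auto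
qed

lemma card_subgroup_dvd:
  assumes "subgroup A G" "subgroup B G" "A \<subseteq> B" "finite B"
  shows "card A dvd card B"
proof -
  interpret B: group "G\<lparr>carrier := B\<rparr>" using assms subgroup_imp_group by blast
  have "subgroup A (G\<lparr>carrier := B\<rparr>)" using assms subgroup_incl by blast
  then have "card (rcosets\<^bsub>G\<lparr>carrier := B\<rparr>\<^esub> A) * card A = order (G\<lparr>carrier := B\<rparr>)"
    using B.lagrange by blast
  then show ?thesis unfolding order_def by (metis dvd_triv_right partial_object.select_convs(1) partial_object.surjective partial_object.update_convs(1))
qed

lemma card_subgroup_dvd_order:
  assumes "subgroup A G" "finite (carrier G)"
  shows "card A dvd order G"
  using lagrange[OF assms(1)] by (metis dvd_triv_right)

lemma subgroup_of_prime_order: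
  assumes "subgroup A G" "subgroup Xs G" "A \<subseteq> Xs" "card Xs = p" "Factorial_Ring.prime p" "finite Xs"
  shows "A = {\<one>} \<or> A = Xs"
proof -
  have "card A dvd p" using card_subgroup_dvd[OF assms(1,2,3,6)] assms(4) by simp
  then have c: "card A = 1 \<or> card A = p" using assms(5) by (simp add: prime_nat_iff)
  have f: "finite A" using assms(3,6) finite_subset by blast
  have o: "\<one> \<in> A" using assms(1) subgroup.one_closed by blast
  show ?thesis
  proof (cases "card A = 1")
    case True
    then obtain x where "A = {x}" by (auto simp: card_1_singleton_iff)
    then show ?thesis using o by auto
  next
    case False
    then have "card A = card Xs" using c assms(4) by simp
    then show ?thesis using card_subset_eq[OF assms(6,3)] by simp
  qed
qed

lemma prime_subgroups_inter:
  assumes "subgroup Xs G" "subgroup Ys G" "card Xs = p" "card Ys = q" "Factorial_Ring.prime p" "Factorial_Ring.prime q"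
    "finite Xs" "finite Ys" "Xs \<noteq> Ys"
  shows "Xs \<inter> Ys = {\<one>}"
proof -
  have s: "subgroup (Xs \<inter> Ys) G" using assms(1,2) by (rule subgroups_Inter_pair)
  have 1: "Xs \<inter> Ys = {\<one>} \<or> Xs \<inter> Ys = Xs" using subgroup_of_prime_order[OF s assms(1) _ assms(3,5,7)] by blast
  have 2: "Xs \<inter> Ys = {\<one>} \<or> Xs \<inter> Ys = Ys" using subgroup_of_prime_order[OF s assms(2) _ assms(4,6,8)] by blast
  show ?thesis using 1 2 assms(9) by blast
qed

lemma exists_subgroup_card:
  assumes "finite (carrier G)" "Factorial_Ring.prime p" "p ^ k dvd order G"
  shows "\<exists>H. subgroup H G \<and> card H = p ^ k"
  using sylow_thm[of p G k "order G div p ^ k"] assms is_group by auto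

end


lemma (in group_action) orbit_subset_E:
  assumes "x \<in> E" shows "orbit G \<phi> x \<subseteq> E"
  unfolding orbit_def using assms element_image by blast

lemma (in group_action) orbit_eq:
  assumes "x \<in> E" "y \<in> orbit G \<phi> x"
  shows "orbit G \<phi> y = orbit G \<phi> x"
proof -
  have yE: "y \<in> E" using assms orbit_subset_E by blast
  have xy: "x \<in> orbit G \<phi> y" using orbit_sym[OF assms(1) yE assms(2)] .
  show ?thesis
  proof
    show "orbit G \<phi> y \<subseteq> orbit G \<phi> x"
      using orbit_trans[OF assms(1) yE] assms orbit_subset_E[OF yE] by blast
    show "orbit G \<phi> x \<subseteq> orbit G \<phi> y"
      using orbit_trans[OF yE assms(1)] xy orbit_subset_E[OF assms(1)] by blast
  qed
qed

lemma fpl: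
  assumes act: "group_action H E \<phi>" and fE: "finite E" and fH: "finite (carrier H)"
    and oH: "order H = p ^ a" and p: "Factorial_Ring.prime p"
  shows "p dvd card (E - {x\<in>E. \<forall>g\<in>carrier H. \<phi> g x = x})"
proof -
  interpret group_action H E \<phi> by (rule act)
  define Fix where "Fix = {x\<in>E. \<forall>g\<in>carrier H. \<phi> g x = x}"
  define NF where "NF = E - Fix"
  have fix_orb: "orbit H \<phi> x = {x}" if "x \<in> Fix" for x
    using that orbit_refl unfolding Fix_def orbit_def by auto
  have nf_orb: "orbit H \<phi> x \<subseteq> NF" if "x \<in> NF" for x
  proof
    fix y assume y: "y \<in> orbit H \<phi> x"
    have xE: "x \<in> E" using that NF_def by auto
    have yE: "y \<in> E" using y orbit_subset_E[OF xE] by blast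
    show "y \<in> NF"
    proof (rule ccontr)
      assume "y \<notin> NF"
      then have "y \<in> Fix" using yE NF_def by auto
      then have "orbit H \<phi> y = {y}" by (rule fix_orb)
      moreover have "x \<in> orbit H \<phi> y" using orbit_sym[OF xE yE y] .
      ultimately have "x = y" by auto
      then show False using that \<open>y \<in> Fix\<close> NF_def by auto
    qed
  qed
  have nf_dvd: "p dvd card (orbit H \<phi> x)" if "x \<in> NF" for x
  proof -
    have xE: "x \<in> E" using that NF_def by auto
    have "card (orbit H \<phi> x) * card (stabilizer H \<phi> x) = p ^ a"
      using orbit_stabilizer_theorem[OF xE] oH by simp
    then have "card (orbit H \<phi> x) dvd p ^ a" by (metis dvd_triv_left)
    then obtain i where i: "card (orbit H \<phi> x) = p ^ i" using divides_primepow_nat[OF p] by blast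
    show ?thesis
    proof (cases i)
      case 0
      then have c1: "card (orbit H \<phi> x) = 1" using i by simp
      have "x \<in> orbit H \<phi> x" using orbit_refl[OF xE] .
      then have "orbit H \<phi> x = {x}" using c1 by (metis card_1_singletonE singletonD)
      then have "x \<in> Fix" unfolding Fix_def orbit_def using xE by blast
      then show ?thesis using that NF_def by auto
    next
      case (Suc j)
      then show ?thesis using i by simp
    qed
  qed
  have U: "NF = \<Union> ((\<lambda>x. orbit H \<phi> x) ` NF)"
    using nf_orb orbit_refl NF_def by blast
  have disj: "pairwise disjnt ((\<lambda>x. orbit H \<phi> x) ` NF)"
  proof (rule pairwiseI)
    fix A B assume A: "A \<in> (\<lambda>x. orbit H \<phi> x) ` NF" and B: "B \<in> (\<lambda>x. orbit H \<phi> x) ` NF" and "A \<noteq> B"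
    obtain x where x: "x \<in> NF" "A = orbit H \<phi> x" using A by blast
    obtain y where y: "y \<in> NF" "B = orbit H \<phi> y" using B by blast
    show "disjnt A B"
    proof (rule ccontr)
      assume "\<not> disjnt A B"
      then obtain z where z: "z \<in> A" "z \<in> B" unfolding disjnt_def by blast
      have "orbit H \<phi> z = A" using orbit_eq[of x z] x z NF_def by auto
      moreover have "orbit H \<phi> z = B" using orbit_eq[of y z] y z NF_def by auto
      ultimately show False using \<open>A \<noteq> B\<close> by simp
    qed
  qed
  have fin: "finite NF" using fE NF_def by auto
  have "card NF = sum card ((\<lambda>x. orbit H \<phi> x) ` NF)"
    apply (subst U)
    apply (rule card_Union_disjoint[OF disj])
    using fin U by (metis Union_upper finite_subset)
  also have "p dvd \<dots>" by (rule dvd_sum) (use nf_dvd in auto)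
  finally show ?thesis unfolding NF_def Fix_def .
qed



context group begin

lemma coset_action:
  assumes Hs: "subgroup Hs G" and L: "subgroup L G" and sub: "Hs \<subseteq> L"
  defines "E \<equiv> {Hs #> x | x. x \<in> L}"
  shows "group_action (G\<lparr>carrier := Hs\<rparr>) E (\<lambda>h. \<lambda>C\<in>E. C #> inv h)"
proof -
  have HsG: "Hs \<subseteq> carrier G" using Hs subgroup.subset by blast
  have LG: "L \<subseteq> carrier G" using L subgroup.subset by blast
  have mapE: "C #> inv h \<in> E" if CE: "C \<in> E" and hH: "h \<in> Hs" for C h
  proof -
    obtain x where x: "x \<in> L" "C = Hs #> x" using CE E_def by blast
    have xG: "x \<in> carrier G" using x LG by auto
    have ihG: "inv h \<in> carrier G" using hH HsG by auto
    have eq: "C #> inv h = Hs #> (x \<otimes> inv h)"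
      by (simp add: x(2) coset_mult_assoc[OF HsG xG ihG])
    have "inv h \<in> L" using subgroup.m_inv_closed[OF L] hH sub by auto
    then have "x \<otimes> inv h \<in> L" using subgroup.m_closed[OF L x(1)] by auto
    then show ?thesis unfolding E_def using eq by auto
  qed
  have ECG: "C \<subseteq> carrier G" if CE: "C \<in> E" for C
  proof -
    obtain x where x: "x \<in> L" "C = Hs #> x" using CE E_def by blast
    then show ?thesis using r_coset_subset_G[OF HsG] LG by auto
  qed
  have bka: "(C #> inv h) #> h = C" if "C \<in> E" "h \<in> Hs" for C h
    using that ECG HsG by (auto simp: coset_mult_assoc coset_mult_one)
  have bkb: "(C #> h) #> inv h = C" if "C \<in> E" "h \<in> Hs" for C h
    using that ECG HsG by (auto simp: coset_mult_assoc coset_mult_one)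
  have mapE2: "C #> h \<in> E" if "C \<in> E" "h \<in> Hs" for C h
  proof -
    have "inv h \<in> Hs" using subgroup.m_inv_closed[OF Hs] that by auto
    moreover have "inv (inv h) = h" using that HsG by auto
    ultimately show ?thesis using mapE[of C "inv h"] that by simp
  qed
  have bij: "(\<lambda>C\<in>E. C #> inv h) \<in> Bij E" if "h \<in> Hs" for h
  proof -
    have "bij_betw (\<lambda>C\<in>E. C #> inv h) E E"
      apply (rule bij_betw_byWitness[where f' = "\<lambda>C. C #> h"])
      using that bka bkb mapE mapE2 by auto
    then show ?thesis unfolding Bij_def by auto
  qed
  have hom: "(\<lambda>h. \<lambda>C\<in>E. C #> inv h) \<in> hom (G\<lparr>carrier := Hs\<rparr>) (BijGroup E)"
  proof (rule homI)
    fix h assume "h \<in> carrier (G\<lparr>carrier := Hs\<rparr>)"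
    then show "(\<lambda>C\<in>E. C #> inv h) \<in> carrier (BijGroup E)"
      using bij by (simp add: BijGroup_def)
  next
    fix h k assume hk: "h \<in> carrier (G\<lparr>carrier := Hs\<rparr>)" "k \<in> carrier (G\<lparr>carrier := Hs\<rparr>)"
    then have h: "h \<in> Hs" and k: "k \<in> Hs" by auto
    have hG: "h \<in> carrier G" and kG: "k \<in> carrier G" using h k HsG by auto
    have "(\<lambda>C\<in>E. C #> inv (h \<otimes> k)) = compose E (\<lambda>C\<in>E. C #> inv h) (\<lambda>C\<in>E. C #> inv k)"
      unfolding compose_def
    proof (rule restrict_ext)
      fix C assume C: "C \<in> E"
      have "C #> inv (h \<otimes> k) = C #> (inv k \<otimes> inv h)" using hG kG by (simp add: inv_mult_group)
      also have "\<dots> = (C #> inv k) #> inv h" using ECG[OF C] hG kG by (simp add: coset_mult_assoc)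
      finally show "C #> inv (h \<otimes> k) = (\<lambda>C\<in>E. C #> inv h) ((\<lambda>C\<in>E. C #> inv k) C)"
        using C mapE[OF C k] by simp
    qed
    then show "(\<lambda>C\<in>E. C #> inv (h \<otimes>\<^bsub>G\<lparr>carrier := Hs\<rparr>\<^esub> k)) =
          (\<lambda>C\<in>E. C #> inv h) \<otimes>\<^bsub>BijGroup E\<^esub> (\<lambda>C\<in>E. C #> inv k)"
      using bij[OF h] bij[OF k] by (simp add: BijGroup_def)
  qed
  show ?thesis
    unfolding group_action_def group_hom_def group_hom_axioms_def
    using hom group_BijGroup subgroup_imp_group[OF Hs] by blast
qed

lemma normalizer_grows:
  assumes fin: "finite (carrier G)" and L: "subgroup L G" and cL: "card L = p ^ a"
    and p: "Factorial_Ring.prime p"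
    and Hs: "subgroup Hs G" and sub: "Hs \<subseteq> L" and ne: "Hs \<noteq> L"
  shows "\<exists>x \<in> L - Hs. x <# Hs #> inv x = Hs"
proof -
  define E where "E = {Hs #> x | x. x \<in> L}"
  have act: "group_action (G\<lparr>carrier := Hs\<rparr>) E (\<lambda>h. \<lambda>C\<in>E. C #> inv h)"
    using coset_action[OF Hs L sub] E_def by simp
  have HsG: "Hs \<subseteq> carrier G" using Hs subgroup.subset by blast
  have LG: "L \<subseteq> carrier G" using L subgroup.subset by blast
  have finL: "finite L" using fin LG finite_subset by blast
  have finHs: "finite Hs" using finL sub finite_subset by blast
  have "E = (\<lambda>x. Hs #> x) ` L" unfolding E_def by auto
  then have finE: "finite E" using finL by simp
  have "card Hs dvd card L" using card_subgroup_dvd[OF Hs L sub finL] .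
  then obtain c where c: "card Hs = p ^ c" "c \<le> a" using divides_primepow_nat[OF p] cL by auto
  have "c \<noteq> a"
  proof
    assume "c = a"
    then have "card Hs = card L" using c cL by simp
    then show False using card_subset_eq[OF finL sub] ne by simp
  qed
  then have ca: "c < a" using c by simp
  have cardE: "card E * card Hs = card L"
  proof -
    interpret Lg: group "G\<lparr>carrier := L\<rparr>" using subgroup_imp_group[OF L] .
    have "subgroup Hs (G\<lparr>carrier := L\<rparr>)" using subgroup_incl[OF Hs L sub] .
    then have "card (rcosets\<^bsub>G\<lparr>carrier := L\<rparr>\<^esub> Hs) * card Hs = order (G\<lparr>carrier := L\<rparr>)"
      by (rule Lg.lagrange)
    moreover have "rcosets\<^bsub>G\<lparr>carrier := L\<rparr>\<^esub> Hs = E"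
      unfolding RCOSETS_def r_coset_def E_def by auto
    ultimately show ?thesis unfolding order_def by simp
  qed
  have "card E = p ^ (a - c)"
  proof -
    have "card E * p ^ c = p ^ (a - c) * p ^ c" using cardE c cL ca
      by (simp add: power_add[symmetric])
    moreover have "p ^ c > 0" using p prime_gt_0_nat by simp
    ultimately show ?thesis using prime_gt_0_nat[OF p] by auto
  qed
  then have pE: "p dvd card E" using ca by simp
  define Fix where "Fix = {C\<in>E. \<forall>h\<in>carrier (G\<lparr>carrier := Hs\<rparr>). (\<lambda>C\<in>E. C #> inv h) C = C}"
  have "p dvd card (E - Fix)" unfolding Fix_def
    apply (rule fpl[OF act finE, of p c])
    using finHs c p by (auto simp: order_def)
  moreover have "card E = card Fix + card (E - Fix)"
  proof -
    have FE: "Fix \<subseteq> E" unfolding Fix_def by auto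
    have "card (E - Fix) = card E - card Fix" using card_Diff_subset[OF finite_subset[OF FE finE] FE] .
    moreover have "card Fix \<le> card E" using card_mono[OF finE FE] .
    ultimately show ?thesis by simp
  qed
  ultimately have pF: "p dvd card Fix" using pE dvd_add_left_iff by metis
  have HsE: "Hs \<in> E" unfolding E_def using coset_mult_one[OF HsG] subgroup.one_closed[OF L] by force
  have "Hs #> inv h = Hs" if "h \<in> Hs" for h
  proof -
    have "inv h \<in> Hs" using that subgroup.m_inv_closed[OF Hs] by auto
    moreover then have "inv h \<in> carrier G" using HsG by auto
    ultimately show ?thesis using coset_join2[OF _ Hs] by blast
  qed
  then have HsF: "Hs \<in> Fix" unfolding Fix_def using HsE by auto
  have finF: "finite Fix" using finE Fix_def by simp
  have "card Fix \<noteq> 0" using HsF finF card_0_eq by blast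
  then have "card Fix \<ge> p" using pF dvd_imp_le by blast
  moreover have "p \<ge> 2" using p prime_ge_2_nat by blast
  ultimately have "card Fix \<ge> 2" by linarith
  have "Fix - {Hs} \<noteq> {}"
  proof
    assume "Fix - {Hs} = {}"
    then have "Fix \<subseteq> {Hs}" by blast
    then have "card Fix \<le> 1" using card_mono[of "{Hs}" Fix] by simp
    then show False using \<open>card Fix \<ge> 2\<close> by simp
  qed
  then obtain C where C: "C \<in> Fix" "C \<noteq> Hs" by blast
  have CE: "C \<in> E" using C(1) unfolding Fix_def by simp
  then obtain x where x: "x \<in> L" "C = Hs #> x" unfolding E_def by blast
  have xG: "x \<in> carrier G" using x LG by auto
  have xH: "x \<notin> Hs" using C x coset_join2[OF xG Hs] by auto
  have fixC: "Hs #> x #> inv h = Hs #> x" if hH: "h \<in> Hs" for h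
  proof -
    have "C #> inv h = C" using C(1) CE hH unfolding Fix_def by auto
    then show ?thesis using x(2) by simp
  qed
  have "x <# Hs #> inv x \<subseteq> Hs"
  proof
    fix y assume "y \<in> x <# Hs #> inv x"
    then obtain k where k: "k \<in> Hs" "y = x \<otimes> k \<otimes> inv x" using conj_image[OF xG HsG] by auto
    have kG: "k \<in> carrier G" using k HsG by auto
    have "inv k \<in> Hs" using k subgroup.m_inv_closed[OF Hs] by auto
    then have "Hs #> x #> inv (inv k) = Hs #> x" using fixC by blast
    then have "Hs #> x #> k = Hs #> x" using kG by simp
    then have "Hs #> (x \<otimes> k) = Hs #> x" using coset_mult_assoc[OF HsG xG kG] by simp
    moreover have "x \<otimes> k \<in> Hs #> (x \<otimes> k)" using rcos_self[OF _ Hs] xG kG by simp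
    ultimately have "x \<otimes> k \<in> Hs #> x" by simp
    then obtain k' where k': "k' \<in> Hs" "x \<otimes> k = k' \<otimes> x" unfolding r_coset_def by auto
    have k'G: "k' \<in> carrier G" using k' HsG by auto
    have "y = k' \<otimes> x \<otimes> inv x" using k k' by simp
    also have "\<dots> = k'" using k'G xG by (simp add: m_assoc)
    finally show "y \<in> Hs" using k' by simp
  qed
  moreover have "card (x <# Hs #> inv x) = card Hs" using card_conj[OF xG HsG] .
  ultimately have "x <# Hs #> inv x = Hs" using card_subset_eq[OF finHs] by blast
  then show ?thesis using x xH by blast
qed

end


definition bad :: "('a, 'b) monoid_scheme \<Rightarrow> 'a set \<Rightarrow> bool" where
  "bad G H \<longleftrightarrow> subgroup H G \<and> H \<noteq> {\<one>\<^bsub>G\<^esub>} \<and> normalizer G H \<noteq> H"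

lemma D_count_bad: "D_count G = card (subgroup_conj_class G ` {H. bad G H})"
  unfolding D_count_def bad_def by simp

context group begin

lemma card1_triv:
  assumes "subgroup H G" "card H = 1" shows "H = {\<one>}"
proof -
  obtain x where "H = {x}" using assms(2) by (auto simp: card_1_singleton_iff)
  then show ?thesis using subgroup.one_closed[OF assms(1)] by auto
qed

lemma card_full:
  assumes "subgroup H G" "finite (carrier G)" "card H = order G" shows "H = carrier G"
  using card_subset_eq[OF assms(2) subgroup.subset[OF assms(1)]] assms(3) unfolding order_def by simp

lemma card_triv: "card {\<one>} = 1" by simp

lemma normalizer_sub:
  assumes "subgroup H G" shows "H \<subseteq> normalizer G H"
proof
  fix h assume h: "h \<in> H"
  have HG: "H \<subseteq> carrier G" using assms subgroup.subset by blast
  have hG: "h \<in> carrier G" using h HG by auto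
  have ih: "inv h \<in> H" using h subgroup.m_inv_closed[OF assms] by auto
  have "h <# H = H" using coset_join3[OF hG assms h] .
  moreover have "H #> inv h = H" using coset_join2[OF _ assms ih] ih HG by auto
  ultimately have "h <# H #> inv h = H" by simp
  then show "h \<in> normalizer G H" using normalizer_eq[OF HG] hG by auto
qed

lemma normalizer_subgroup:
  assumes "subgroup H G" shows "subgroup (normalizer G H) G"
  using normalizer_imp_subgroup[OF subgroup.subset[OF assms]] .

lemma normalizer_carrier: "normalizer G (carrier G) = carrier G"
proof -
  have "normalizer G (carrier G) \<subseteq> carrier G"
    using normalizer_subgroup[OF subgroup_self] subgroup.subset by blast
  then show ?thesis using normalizer_sub[OF subgroup_self] by blast
qed

lemma conj_inv:
  assumes "g \<in> carrier G" "H \<subseteq> carrier G"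
  shows "inv g <# (g <# H #> inv g) #> g = H"
  using subgroup_conjugation_is_surj0[of "inv g" H] assms by simp

lemma gen_comm:
  assumes "y \<in> carrier G" "generate G {y} = carrier G"
  shows "comm_group G" "cyclic_group G"
proof -
  have "subgroup_generated G {y} = G"
    unfolding subgroup_generated_def using assms by simp
  then show c: "cyclic_group G" unfolding cyclic_group_def using assms(1) by blast
  show "comm_group G" using cyclic_imp_abelian_group[OF c] .
qed

lemma sub_subgroup_card:
  assumes "subgroup K G" "finite K" "Factorial_Ring.prime p" "p ^ k dvd card K"
  shows "\<exists>Xs. subgroup Xs G \<and> Xs \<subseteq> K \<and> card Xs = p ^ k"
proof -
  interpret K: group "G\<lparr>carrier := K\<rparr>" using subgroup_imp_group[OF assms(1)] .
  obtain Xs where "subgroup Xs (G\<lparr>carrier := K\<rparr>)" "card Xs = p ^ k"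
    using K.exists_subgroup_card[of p k] assms by (auto simp: order_def)
  moreover then have "subgroup Xs G" using incl_subgroup[OF assms(1)] by blast
  moreover have "Xs \<subseteq> K" using subgroup.subset[OF calculation(1)] by simp
  ultimately show ?thesis by blast
qed

lemma snc:
  assumes fin: "finite (carrier G)" and Xs: "subgroup Xs G" and cX: "card Xs = p"
    and p: "Factorial_Ring.prime p" and N: "normalizer G Xs = Xs"
  shows "card (\<Union>(subgroup_conj_class G Xs) - {\<one>}) * p = order G * (p - 1)"
    and "\<And>c. c \<in> subgroup_conj_class G Xs \<Longrightarrow> subgroup c G \<and> card c = p"
proof -
  have XG: "Xs \<subseteq> carrier G" using Xs subgroup.subset by blast
  define C where "C = subgroup_conj_class G Xs"
  have cC: "card C * p = order G" using orbit_stab_conj[OF XG fin] N cX C_def by simp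
  have mem: "subgroup c G \<and> card c = p" if cin: "c \<in> C" for c
  proof -
    obtain g where g: "g \<in> carrier G" "c = g <# Xs #> inv g"
      using cin unfolding C_def subgroup_conj_class_def by blast
    then show ?thesis using conj_sub[OF g(1) Xs] card_conj[OF g(1) XG] cX by simp
  qed
  then show "\<And>c. c \<in> subgroup_conj_class G Xs \<Longrightarrow> subgroup c G \<and> card c = p" using C_def by simp
  have finC: "finite C"
  proof -
    have "C \<subseteq> Pow (carrier G)" using mem subgroup.subset by blast
    then show ?thesis using finite_subset finite_Pow_iff[THEN iffD2, OF fin] by blast
  qed
  have finc: "finite c" if "c \<in> C" for c
    using mem[OF that] fin subgroup.subset[of c G] finite_subset by blast
  have eq: "\<Union>C - {\<one>} = \<Union>((\<lambda>c. c - {\<one>}) ` C)" by blast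
  have "card (\<Union>((\<lambda>c. c - {\<one>}) ` C)) = (\<Sum>c\<in>C. card (c - {\<one>}))"
  proof (rule card_UN_disjoint[OF finC])
    show "\<forall>c\<in>C. finite (c - {\<one>})" using finc by blast
    show "\<forall>c\<in>C. \<forall>d\<in>C. c \<noteq> d \<longrightarrow> (c - {\<one>}) \<inter> (d - {\<one>}) = {}"
    proof (intro ballI impI)
      fix c d assume c: "c \<in> C" and d: "d \<in> C" and "c \<noteq> d"
      then have "c \<inter> d = {\<one>}"
        using prime_subgroups_inter[of c d p p] mem[OF c] mem[OF d] finc[OF c] finc[OF d] p by blast
      then show "(c - {\<one>}) \<inter> (d - {\<one>}) = {}" by blast
    qed
  qed
  also have "\<dots> = (\<Sum>c\<in>C. p - 1)"
  proof (rule sum.cong[OF refl])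
    fix c assume c: "c \<in> C"
    have "\<one> \<in> c" using mem[OF c] subgroup.one_closed by blast
    then show "card (c - {\<one>}) = p - 1" using mem[OF c] finc[OF c] by simp
  qed
  also have "\<dots> = card C * (p - 1)" by simp
  finally have s1: "card (\<Union>((\<lambda>c. c - {\<one>}) ` C)) = card C * (p - 1)" .
  have "card (\<Union>C - {\<one>}) = card C * (p - 1)" unfolding eq using s1 .
  then show "card (\<Union>(subgroup_conj_class G Xs) - {\<one>}) * p = order G * (p - 1)"
    using cC C_def by (metis mult.assoc mult.commute)
qed

end


context group begin

lemma comm_bad_iff:
  assumes "comm_group G"
  shows "bad G H \<longleftrightarrow> subgroup H G \<and> H \<noteq> {\<one>} \<and> H \<noteq> carrier G"
proof -
  have "subgroup H G \<Longrightarrow> normalizer G H = carrier G"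
    using normal_normalizer comm_group.subgroup_imp_normal[OF assms] by blast
  then show ?thesis unfolding bad_def by auto
qed

lemma D1_conj:
  assumes "D_count G = 1" "bad G H" "bad G H'"
  shows "H' \<in> subgroup_conj_class G H"
proof -
  have "card (subgroup_conj_class G ` {H. bad G H}) = 1" using assms(1) by (simp add: D_count_bad)
  then obtain c where c: "subgroup_conj_class G ` {H. bad G H} = {c}" by (auto simp: card_1_singleton_iff)
  have "subgroup_conj_class G H = c" "subgroup_conj_class G H' = c" using c assms(2,3) by blast+
  moreover have "H' \<in> subgroup_conj_class G H'"
    using self_in_conj_class assms(3) subgroup.subset unfolding bad_def by blast
  ultimately show ?thesis by simp
qed

lemma D1_nonempty:
  assumes "D_count G = 1" shows "\<exists>H. bad G H"
proof (rule ccontr)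
  assume "\<not> (\<exists>H. bad G H)"
  then have "{H. bad G H} = {}" by auto
  then show False using assms by (simp add: D_count_bad)
qed

lemma D1_card:
  assumes "D_count G = 1" "bad G H" "bad G H'"
  shows "card H' = card H"
proof -
  obtain g where g: "g \<in> carrier G" "H' = g <# H #> inv g"
    using D1_conj[OF assms] unfolding subgroup_conj_class_def by blast
  have "H \<subseteq> carrier G" using assms(2) subgroup.subset unfolding bad_def by blast
  then show ?thesis using card_conj g by simp
qed

lemma D_single:
  assumes "\<And>H. bad G H \<longleftrightarrow> H = S"
  shows "D_count G = 1"
proof -
  have "{H. bad G H} = {S}" using assms by auto
  then show ?thesis by (simp add: D_count_bad)
qed

lemma card_prime_sub_ne1:
  assumes "subgroup H G" "card H = p" "Factorial_Ring.prime p"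
  shows "H \<noteq> {\<one>}"
  using assms prime_gt_1_nat by force

lemma abelian_fwd:
  assumes comm: "comm_group G" and fin: "finite (carrier G)" and D: "D_count G = 1"
  shows "cyclic_group G \<and> (\<exists>p. Factorial_Ring.prime p \<and> order G = p ^ 2)"
proof -
  obtain H0 where H0: "bad G H0" using D1_nonempty[OF D] by blast
  have U: "H = H0" if "subgroup H G" "H \<noteq> {\<one>}" "H \<noteq> carrier G" for H
  proof -
    have "bad G H" using comm_bad_iff[OF comm] that by simp
    then obtain g where g: "g \<in> carrier G" "H = g <# H0 #> inv g"
      using D1_conj[OF D H0] unfolding subgroup_conj_class_def by blast
    have "H0 \<lhd> G" using comm_group.subgroup_imp_normal[OF comm] H0 unfolding bad_def by blast
    then show ?thesis using g normal_conj by simp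
  qed
  have H0s: "subgroup H0 G" "H0 \<noteq> {\<one>}" "H0 \<noteq> carrier G" using H0 comm_bad_iff[OF comm] by auto
  have finH0: "finite H0" using fin H0s(1) subgroup.subset finite_subset by blast
  define n where "n = order G"
  have np: "\<not> Factorial_Ring.prime n"
  proof
    assume pn: "Factorial_Ring.prime n"
    have "card H0 dvd n" using card_subgroup_dvd_order[OF H0s(1) fin] n_def by simp
    then have "card H0 = 1 \<or> card H0 = n" using pn by (simp add: prime_nat_iff)
    then show False using card1_triv[OF H0s(1)] card_full[OF H0s(1) fin] H0s n_def by blast
  qed
  have n1: "n \<noteq> 1"
  proof
    assume "n = 1"
    then have "card H0 dvd 1" using card_subgroup_dvd_order[OF H0s(1) fin] n_def by simp
    then show False using card1_triv[OF H0s(1)] H0s by simp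
  qed
  have pd: "t = card H0" if tp: "Factorial_Ring.prime t" and td: "t dvd n" for t
  proof -
    obtain T where T: "subgroup T G" "card T = t" using exists_subgroup_card[OF fin tp, of 1] td n_def by auto
    have "T \<noteq> {\<one>}" using card_prime_sub_ne1[OF T tp] .
    moreover have "T \<noteq> carrier G" using T np tp n_def unfolding order_def by auto
    ultimately have "T = H0" using U T by blast
    then show ?thesis using T by simp
  qed
  obtain p where p: "Factorial_Ring.prime p" "p dvd n" using prime_factor_nat[OF n1] by blast
  have cp: "card H0 = p" using pd p by simp
  obtain r where r: "n = p * r" using p by (auto elim: dvdE)
  have "r \<noteq> 1" using r np p by auto
  then obtain t where t: "Factorial_Ring.prime t" "t dvd r" using prime_factor_nat by blast
  then have "t = p" using pd[of t] cp r by simp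
  then obtain s where s: "n = p ^ 2 * s" using t r by (auto elim!: dvdE simp: power2_eq_square mult.assoc)
  have s1: "s = 1"
  proof (rule ccontr)
    assume "s \<noteq> 1"
    then obtain u where u: "Factorial_Ring.prime u" "u dvd s" using prime_factor_nat by blast
    then have "u = p" using pd[of u] cp s by simp
    obtain K where K: "subgroup K G" "card K = p ^ 2"
      using exists_subgroup_card[OF fin p(1), of 2] s n_def by auto
    have "K \<noteq> {\<one>}" using K p(1) prime_gt_1_nat by (metis card1_triv card_triv one_less_power
          less_irrefl zero_less_numeral)
    moreover have "K \<noteq> carrier G"
    proof
      assume "K = carrier G"
      then have "p ^ 2 = p ^ 2 * s" using K s n_def by (simp add: order_def)
      then show False using \<open>s \<noteq> 1\<close> p(1) by (simp add: prime_gt_0_nat)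
    qed
    ultimately have "K = H0" using U K by blast
    then have "p ^ 2 = p" using K cp by simp
    then show False using p(1) prime_gt_1_nat
      by (metis power2_eq_square mult_cancel2 nat_neq_iff not_one_less_zero mult_1)
  qed
  have ord: "order G = p ^ 2" using s s1 n_def by simp
  obtain y where y: "y \<in> carrier G" "y \<notin> H0" using H0s subgroup.subset by blast
  have gs: "subgroup (generate G {y}) G" using generate_is_subgroup y by simp
  have yg: "y \<in> generate G {y}" by (simp add: generate.incl)
  have "generate G {y} \<noteq> {\<one>}" using yg y subgroup.one_closed[OF H0s(1)] by auto
  moreover have "generate G {y} \<noteq> H0" using yg y by auto
  ultimately have "generate G {y} = carrier G" using U gs by blast
  then have "cyclic_group G" using gen_comm y by blast
  then show ?thesis using ord p by blast
qed

lemma abelian_bwd: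
  assumes comm: "comm_group G" and fin: "finite (carrier G)" and cyc: "cyclic_group G"
    and p: "Factorial_Ring.prime p" and ord: "order G = p ^ 2"
  shows "D_count G = 1"
proof -
  obtain g where g: "g \<in> carrier G" "subgroup_generated G {g} = G" using cyc unfolding cyclic_group_def by blast
  have "carrier (subgroup_generated G {g}) = generate G {g}"
    unfolding subgroup_generated_def using g by simp
  then have cg: "carrier G = generate G {g}" using g by simp
  have og: "ord g = p ^ 2" using generate_pow_card[OF g(1)] cg ord by (simp add: order_def)
  define gp where "gp = g [^] p"
  have gpG: "gp \<in> carrier G" using g gp_def by simp
  define S where "S = generate G {gp}"
  have Ssub: "subgroup S G" using generate_is_subgroup gpG S_def by simp
  have cS: "card S = p"
  proof -
    have "ord gp = p ^ 2 div p" using ord_pow[OF g(1), of p] og p gp_def prime_gt_0_nat by simp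
    then show ?thesis using generate_pow_card[OF gpG] S_def p prime_gt_0_nat
      by (simp add: power2_eq_square)
  qed
  have finS: "finite S" using fin Ssub subgroup.subset finite_subset by blast
  have pne: "p \<noteq> p ^ 2" using p prime_gt_1_nat
    by (metis power2_eq_square mult_cancel2 nat_neq_iff not_one_less_zero mult_1)
  show ?thesis
  proof (rule D_single[of S])
    fix H
    show "bad G H \<longleftrightarrow> H = S"
    proof
      assume "bad G H"
      then have H: "subgroup H G" "H \<noteq> {\<one>}" "H \<noteq> carrier G" using comm_bad_iff[OF comm] by auto
      have finH: "finite H" using fin H subgroup.subset finite_subset by blast
      have "card H dvd p ^ 2" using card_subgroup_dvd_order[OF H(1) fin] ord by simp
      then obtain i where i: "i \<le> 2" "card H = p ^ i" using divides_primepow_nat[OF p] by blast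
      have "i \<noteq> 0" using i card1_triv[OF H(1)] H by auto
      moreover have "i \<noteq> 2" using i card_full[OF H(1) fin] H ord by auto
      ultimately have "i = 1" using i by linarith
      then have cH: "card H = p" using i by simp
      have "H \<subseteq> S"
      proof
        fix h assume h: "h \<in> H"
        have hG: "h \<in> carrier G" using h H subgroup.subset by blast
        have "generate G {h} \<subseteq> H" using generate_subgroup_incl[OF _ H(1)] h by simp
        moreover have "subgroup (generate G {h}) G" using generate_is_subgroup hG by simp
        ultimately have "card (generate G {h}) dvd card H"
          using card_subgroup_dvd[OF _ H(1) _ finH] by blast
        then have "ord h dvd p" using generate_pow_card[OF hG] cH by simp
        then have hp: "h [^] p = \<one>" using pow_eq_id[OF hG] by simp
        have "h \<in> generate G {g}" using hG cg by simp
        then obtain k where k: "h = g [^] (k::nat)" using generate_pow_on_finite_carrier[OF fin g(1)] by blast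
        have "g [^] (k * p) = \<one>" using hp k g(1) by (simp add: nat_pow_pow)
        then have "p ^ 2 dvd k * p" using pow_eq_id[OF g(1)] og by simp
        then have "p dvd k" using p prime_gt_0_nat by (simp add: power2_eq_square)
        then obtain j where j: "k = p * j" by (auto elim: dvdE)
        have "h = gp [^] j" using k j gp_def g(1) by (simp add: nat_pow_pow)
        then show "h \<in> S" using generate_pow_on_finite_carrier[OF fin gpG] S_def by blast
      qed
      then show "H = S" using card_subset_eq[OF finS] cH cS by simp
    next
      assume "H = S"
      moreover have "S \<noteq> {\<one>}" using card_prime_sub_ne1[OF Ssub cS p] .
      moreover have "S \<noteq> carrier G" using cS ord pne by (auto simp: order_def)
      ultimately show "bad G H" using comm_bad_iff[OF comm] Ssub by simp
    qed
  qed
qed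

end


lemma arith_pq:
  fixes p q :: nat
  assumes "p \<ge> 2" "q \<ge> 2"
  shows "\<not> ((p - 1) * q + (q - 1) * p < p * q)"
proof -
  obtain a b where "p = a + 2" "q = b + 2" using assms by (metis add.commute le_Suc_ex)
  then show ?thesis by (simp add: algebra_simps)
qed

lemma dvd_pq:
  fixes p q d :: nat
  assumes "Factorial_Ring.prime p" "Factorial_Ring.prime q" "d dvd p * q"
  shows "d = 1 \<or> d = p \<or> d = q \<or> d = p * q"
proof (cases "p dvd d")
  case True
  then obtain e where e: "d = p * e" by (auto elim: dvdE)
  then have "e dvd q" using assms(1,3) prime_gt_0_nat by auto
  then have "e = 1 \<or> e = q" using assms(2) by (simp add: prime_nat_iff)
  then show ?thesis using e by auto
next
  case False
  then have "coprime d p" using assms(1) by (metis coprime_commute prime_imp_coprime)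
  then have "d dvd q" using assms(3) by (metis coprime_dvd_mult_right_iff)
  then have "d = 1 \<or> d = q" using assms(2) by (simp add: prime_nat_iff)
  then show ?thesis by blast
qed

context group begin

lemma prime_order_comm:
  assumes fin: "finite (carrier G)" and pn: "Factorial_Ring.prime (order G) \<or> order G = 1"
  shows "comm_group G"
proof (cases "order G = 1")
  case True
  then obtain x where x: "carrier G = {x}" unfolding order_def by (auto simp: card_1_singleton_iff)
  then have "x = \<one>" using one_closed by auto
  have "generate G {\<one>} \<subseteq> carrier G" using generate_is_subgroup[of "{\<one>}"] subgroup.subset by auto
  moreover have "\<one> \<in> generate G {\<one>}" by (simp add: generate.incl)
  ultimately have "generate G {\<one>} = carrier G" using x \<open>x = \<one>\<close> by auto
  then show ?thesis using gen_comm by auto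
next
  case False
  then have p: "Factorial_Ring.prime (order G)" using pn by simp
  then have "card (carrier G) \<ge> 2" unfolding order_def using prime_ge_2_nat by blast
  have "\<not> carrier G \<subseteq> {\<one>}"
  proof
    assume "carrier G \<subseteq> {\<one>}"
    then have "card (carrier G) \<le> 1" using card_mono[of "{\<one>}" "carrier G"] by simp
    then show False using \<open>card (carrier G) \<ge> 2\<close> by simp
  qed
  then obtain y where y: "y \<in> carrier G" "y \<noteq> \<one>" by blast
  have gs: "subgroup (generate G {y}) G" using generate_is_subgroup y by simp
  have "card (generate G {y}) dvd order G" using card_subgroup_dvd_order[OF gs fin] .
  then have "card (generate G {y}) = 1 \<or> card (generate G {y}) = order G" using p by (simp add: prime_nat_iff)
  moreover have "generate G {y} \<noteq> {\<one>}" using y generate.incl[of y "{y}" G] by auto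
  ultimately have "generate G {y} = carrier G" using card1_triv[OF gs] card_full[OF gs fin] by blast
  then show ?thesis using gen_comm y by blast
qed

lemma grows_bad:
  assumes fin: "finite (carrier G)" and K: "subgroup K G" "card K = p ^ a" and p: "Factorial_Ring.prime p"
    and X: "subgroup Xs G" "Xs \<subseteq> K" "Xs \<noteq> K" "Xs \<noteq> {\<one>}"
  shows "bad G Xs"
proof -
  obtain x where x: "x \<in> K - Xs" "x <# Xs #> inv x = Xs" using normalizer_grows[OF fin K p X(1-3)] by blast
  have "x \<in> carrier G" using x K subgroup.subset by blast
  then have "x \<in> normalizer G Xs" using x normalizer_eq[of Xs] X subgroup.subset by blast
  then show ?thesis using x X unfolding bad_def by blast
qed

lemma union_full:
  assumes fin: "finite (carrier G)" and "A \<subseteq> carrier G - {\<one>}" "B \<subseteq> carrier G - {\<one>}" "A \<inter> B = {}"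
    and "card A + card B = order G - 1"
  shows "A \<union> B = carrier G - {\<one>}"
proof -
  have fA: "finite A" "finite B" using assms finite_subset by (meson finite_Diff)+
  have "card (A \<union> B) = order G - 1" using card_Un_disjoint[OF fA assms(4)] assms(5) by simp
  moreover have "card (carrier G - {\<one>}) = order G - 1" unfolding order_def using fin by simp
  ultimately show ?thesis using card_subset_eq[of "carrier G - {\<one>}" "A \<union> B"] fin assms(2,3) by auto
qed

lemma class_disj:
  assumes fin: "finite (carrier G)" and
    C: "\<And>c. c \<in> CC \<Longrightarrow> subgroup c G \<and> card c = p" and p: "Factorial_Ring.prime p"
    and D: "\<And>d. d \<in> DD \<Longrightarrow> subgroup d G \<and> card d = q" and q: "Factorial_Ring.prime q" and pq: "p \<noteq> q"
  shows "(\<Union>CC - {\<one>}) \<inter> (\<Union>DD - {\<one>}) = {}"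
proof -
  have "z = \<one>" if z: "z \<in> c" "z \<in> d" "c \<in> CC" "d \<in> DD" for z c d
  proof -
    have fc: "finite c" "finite d" using C[OF z(3)] D[OF z(4)] fin subgroup.subset finite_subset by metis+
    have "c \<noteq> d" using C[OF z(3)] D[OF z(4)] pq by auto
    then have "c \<inter> d = {\<one>}" using prime_subgroups_inter[of c d p q] C[OF z(3)] D[OF z(4)] fc p q by blast
    then show ?thesis using z by blast
  qed
  then show ?thesis by blast
qed

lemma two_sn:
  assumes fin: "finite (carrier G)"
    and X: "subgroup Xs G" "card Xs = p" "Factorial_Ring.prime p" "normalizer G Xs = Xs"
    and Y: "subgroup Ys G" "card Ys = q" "Factorial_Ring.prime q" "normalizer G Ys = Ys"
    and pq: "p \<noteq> q"
  shows False
proof -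
  define U where "U = \<Union>(subgroup_conj_class G Xs) - {\<one>}"
  define V where "V = \<Union>(subgroup_conj_class G Ys) - {\<one>}"
  have cU: "card U * p = order G * (p - 1)" using snc(1)[OF fin X] U_def by simp
  have cV: "card V * q = order G * (q - 1)" using snc(1)[OF fin Y] V_def by simp
  have disj: "U \<inter> V = {}" unfolding U_def V_def
    by (rule class_disj[OF fin _ X(3) _ Y(3) pq]) (use snc(2)[OF fin X] snc(2)[OF fin Y] in auto)
  have UG: "U \<subseteq> carrier G - {\<one>}" "V \<subseteq> carrier G - {\<one>}" unfolding U_def V_def
    using snc(2)[OF fin X] snc(2)[OF fin Y] subgroup.subset by blast+
  have fUV: "finite U" "finite V" using UG fin finite_subset by (meson finite_Diff)+
  have "card (U \<union> V) \<le> card (carrier G - {\<one>})" using UG fin card_mono by (metis Un_subset_iff finite_Diff)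
  then have le: "card U + card V \<le> order G - 1" using card_Un_disjoint[OF fUV disj] fin unfolding order_def by simp
  have n0: "order G > 0" using fin order_gt_0_iff_finite by blast
  have "card U + card V < order G" using le n0 by linarith
  then have "(card U + card V) * (p * q) < order G * (p * q)"
    using X(3) Y(3) prime_gt_0_nat by simp
  moreover have "(card U + card V) * (p * q) = order G * ((p - 1) * q + (q - 1) * p)"
  proof -
    have "(card U + card V) * (p * q) = (card U * p) * q + (card V * q) * p" by (simp add: algebra_simps)
    also have "\<dots> = order G * ((p - 1) * q + (q - 1) * p)" using cU cV by (simp add: algebra_simps)
    finally show ?thesis .
  qed
  ultimately have "order G * ((p - 1) * q + (q - 1) * p) < order G * (p * q)" by simp
  then have "(p - 1) * q + (q - 1) * p < p * q" by simp
  then show False using arith_pq X(3) Y(3) prime_ge_2_nat by blast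
qed

lemma norm_pq:
  assumes fin: "finite (carrier G)" and ord: "order G = r * s"
    and r: "Factorial_Ring.prime r" and s: "Factorial_Ring.prime s" and rs: "r \<noteq> s"
    and X: "subgroup Xs G" "card Xs = s"
  shows "normalizer G Xs = Xs \<or> normalizer G Xs = carrier G"
proof -
  have XG: "Xs \<subseteq> carrier G" using X subgroup.subset by blast
  have Ns: "subgroup (normalizer G Xs) G" using normalizer_subgroup[OF X(1)] .
  have XN: "Xs \<subseteq> normalizer G Xs" using normalizer_sub[OF X(1)] .
  have fN: "finite (normalizer G Xs)" using Ns fin subgroup.subset finite_subset by blast
  have "card (normalizer G Xs) dvd r * s" using card_subgroup_dvd_order[OF Ns fin] ord by simp
  then have d: "card (normalizer G Xs) = 1 \<or> card (normalizer G Xs) = r \<or> card (normalizer G Xs) = s \<or>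
      card (normalizer G Xs) = r * s" using dvd_pq[OF r s] by blast
  have "s dvd card (normalizer G Xs)" using card_subgroup_dvd[OF X(1) Ns XN fN] X by simp
  moreover have "\<not> s dvd 1" using s prime_gt_1_nat by auto
  moreover have "\<not> s dvd r" using r s rs by (metis primes_dvd_imp_eq)
  ultimately have "card (normalizer G Xs) = s \<or> card (normalizer G Xs) = r * s" using d by auto
  then show ?thesis
  proof
    assume "card (normalizer G Xs) = s"
    then have "normalizer G Xs = Xs" using card_subset_eq[OF fN XN] X by simp
    then show ?thesis by simp
  next
    assume "card (normalizer G Xs) = r * s"
    then show ?thesis using card_full[OF Ns fin] ord by simp
  qed
qed

end


lemma arith2:
  fixes r s :: nat
  assumes "r \<ge> 1" "s \<ge> 1"
  shows "s * (r - 1) + (s - 1) = r * s - 1"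
proof -
  obtain a b where "r = a + 1" "s = b + 1" using assms by (metis add.commute le_Suc_ex)
  then show ?thesis by (simp add: algebra_simps)
qed

context group begin

lemma bwd_core:
  assumes fin: "finite (carrier G)" and ord: "order G = r * s"
    and r: "Factorial_Ring.prime r" and s: "Factorial_Ring.prime s" and rs: "r \<noteq> s"
    and H: "subgroup H G" and cH: "card H = r" and NH: "normalizer G H = H"
  shows "D_count G = 1"
proof -
  have r2: "r \<ge> 2" and s2: "s \<ge> 2" using r s prime_ge_2_nat by auto
  obtain Y where Y: "subgroup Y G" "card Y = s"
    using exists_subgroup_card[OF fin s, of 1] ord by auto
  have NY: "normalizer G Y = carrier G"
  proof -
    have "normalizer G Y = Y \<or> normalizer G Y = carrier G" using norm_pq[OF fin ord r s rs Y] .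
    moreover have "normalizer G Y \<noteq> Y"
    proof
      assume "normalizer G Y = Y"
      then show False using two_sn[OF fin H cH r NH Y s _ rs] by blast
    qed
    ultimately show ?thesis by blast
  qed
  have cls: "\<And>c. c \<in> subgroup_conj_class G H \<Longrightarrow> subgroup c G \<and> card c = r"
    using snc(2)[OF fin H cH r NH] by blast
  define U where "U = \<Union>(subgroup_conj_class G H) - {\<one>}"
  have cU0: "card U * r = order G * (r - 1)" using snc(1)[OF fin H cH r NH] U_def by simp
  have cU: "card U = s * (r - 1)"
  proof -
    have "card U * r = (s * (r - 1)) * r" using cU0 ord by (simp add: algebra_simps)
    then show ?thesis using r2 by simp
  qed
  define Y1 where "Y1 = Y - {\<one>}"
  have YG: "Y \<subseteq> carrier G" using Y subgroup.subset by blast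
  have finY: "finite Y" using YG fin finite_subset by blast
  have oneY: "\<one> \<in> Y" using Y subgroup.one_closed by blast
  have cY1: "card Y1 = s - 1" using Y1_def finY oneY Y by simp
  have disj: "U \<inter> Y1 = {}"
  proof -
    have "(\<Union>(subgroup_conj_class G H) - {\<one>}) \<inter> (\<Union>{Y} - {\<one>}) = {}"
      by (rule class_disj[OF fin cls r _ s rs]) (use Y in auto)
    then show ?thesis unfolding U_def Y1_def by simp
  qed
  have UG: "U \<subseteq> carrier G - {\<one>}" unfolding U_def using cls subgroup.subset by blast
  have Y1G: "Y1 \<subseteq> carrier G - {\<one>}" unfolding Y1_def using YG by blast
  have full: "U \<union> Y1 = carrier G - {\<one>}"
    by (rule union_full[OF fin UG Y1G disj]) (use cU cY1 ord arith2 r2 s2 in auto)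
  have Yne: "Y \<noteq> carrier G"
  proof
    assume "Y = carrier G"
    then have "card Y = r * s" using ord unfolding order_def by simp
    then have "s = r * s" using Y(2) by simp
    then show False using r2 s2 by auto
  qed
  show ?thesis
  proof (rule D_single[of Y])
    fix Z
    show "bad G Z \<longleftrightarrow> Z = Y"
    proof
      assume "Z = Y"
      moreover have "Y \<noteq> {\<one>}" using card_prime_sub_ne1[OF Y s] .
      ultimately show "bad G Z" unfolding bad_def using Y NY Yne by simp
    next
      assume bZ: "bad G Z"
      then have Z: "subgroup Z G" "Z \<noteq> {\<one>}" "normalizer G Z \<noteq> Z" unfolding bad_def by auto
      have Zne: "Z \<noteq> carrier G" using Z normalizer_carrier by auto
      have ZG: "Z \<subseteq> carrier G" using Z subgroup.subset by blast
      have finZ: "finite Z" using ZG fin finite_subset by blast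
      have oneZ: "\<one> \<in> Z" using Z subgroup.one_closed by blast
      have "card Z dvd r * s" using card_subgroup_dvd_order[OF Z(1) fin] ord by simp
      then have "card Z = 1 \<or> card Z = r \<or> card Z = s \<or> card Z = r * s" using dvd_pq[OF r s] by blast
      moreover have "card Z \<noteq> 1" using card1_triv[OF Z(1)] Z by blast
      moreover have "card Z \<noteq> r * s" using card_full[OF Z(1) fin] Zne ord by auto
      ultimately have "card Z = r \<or> card Z = s" by blast
      then show "Z = Y"
      proof
        assume cZ: "card Z = s"
        have "(\<Union>{Z} - {\<one>}) \<inter> (\<Union>(subgroup_conj_class G H) - {\<one>}) = {}"
          by (rule class_disj[OF fin _ s cls r]) (use Z cZ rs in auto)
        then have d: "(Z - {\<one>}) \<inter> U = {}" unfolding U_def by simp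
        have "Z - {\<one>} \<subseteq> carrier G - {\<one>}" using ZG by blast
        then have "Z - {\<one>} \<subseteq> U \<union> Y1" using full by simp
        then have "Z - {\<one>} \<subseteq> Y1" using d by blast
        then have "Z \<subseteq> Y" using oneY Y1_def by blast
        then show "Z = Y" using card_subset_eq[OF finY] cZ Y by simp
      next
        assume cZ: "card Z = r"
        have NZ: "normalizer G Z = carrier G"
          using norm_pq[OF fin _ s r _ Z(1) cZ] ord rs Z(3) by (auto simp: mult.commute)
        have "Z \<noteq> Y" using cZ Y rs by auto
        then have "Z \<inter> Y = {\<one>}" using prime_subgroups_inter[OF Z(1) Y(1) cZ Y(2) r s finZ finY] by simp
        then have d2: "(Z - {\<one>}) \<inter> Y1 = {}" unfolding Y1_def by blast
        have "Z - {\<one>} \<subseteq> carrier G - {\<one>}" using ZG by blast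
        then have "Z - {\<one>} \<subseteq> U \<union> Y1" using full by simp
        then have "Z - {\<one>} \<subseteq> U" using d2 by blast
        have "Z - {\<one>} \<noteq> {}" using Z oneZ by blast
        then obtain z where z: "z \<in> Z" "z \<noteq> \<one>" by blast
        then have "z \<in> U" using \<open>Z - {\<one>} \<subseteq> U\<close> by blast
        then obtain c where c: "c \<in> subgroup_conj_class G H" "z \<in> c" unfolding U_def by blast
        obtain g where g: "g \<in> carrier G" "c = g <# H #> inv g"
          using c(1) unfolding subgroup_conj_class_def by blast
        have fc: "finite c" using cls[OF c(1)] fin subgroup.subset finite_subset by metis
        have "Z = c"
        proof (rule ccontr)
          assume "Z \<noteq> c"
          then have "Z \<inter> c = {\<one>}" using prime_subgroups_inter[of Z c r r] Z(1) cZ cls[OF c(1)] r finZ fc by blast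
          then show False using z c by blast
        qed
        have HG: "H \<subseteq> carrier G" using H subgroup.subset by blast
        have igN: "inv g \<in> normalizer G Z" using NZ g by simp
        have "inv g <# Z #> inv (inv g) = Z" using igN normalizer_eq[OF ZG] by simp
        then have "inv g <# Z #> g = Z" using g by simp
        moreover have "inv g <# c #> g = H" using conj_inv[OF g(1) HG] g by simp
        ultimately have "H = Z" using \<open>Z = c\<close> by simp
        then have "H = carrier G" using NH NZ by simp
        then show "Z = Y" using \<open>H = Z\<close> Zne by simp
      qed
    qed
  qed
qed

lemma nonab_bwd:
  assumes nc: "\<not> comm_group G" and fin: "finite (carrier G)" and fr: "frobenius_group G"
    and p: "Factorial_Ring.prime p" and q: "Factorial_Ring.prime q" and ord: "order G = p * q"
  shows "D_count G = 1"
proof -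
  obtain H where H: "subgroup H G" "H \<noteq> {\<one>}" "H \<noteq> carrier G"
    and frH: "\<forall>g \<in> carrier G - H. H \<inter> (g <# H #> inv g) = {\<one>}"
    using fr unfolding frobenius_group_def by blast
  have HG: "H \<subseteq> carrier G" using H subgroup.subset by blast
  have NH: "normalizer G H = H"
  proof
    show "H \<subseteq> normalizer G H" using normalizer_sub[OF H(1)] .
    show "normalizer G H \<subseteq> H"
    proof
      fix g assume "g \<in> normalizer G H"
      then have g: "g \<in> carrier G" "g <# H #> inv g = H" using normalizer_eq[OF HG] by auto
      show "g \<in> H"
      proof (rule ccontr)
        assume "g \<notin> H"
        then have "H \<inter> (g <# H #> inv g) = {\<one>}" using frH g by blast
        then show False using g H by simp
      qed
    qed
  qed
  have "card H dvd p * q" using card_subgroup_dvd_order[OF H(1) fin] ord by simp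
  then have "card H = 1 \<or> card H = p \<or> card H = q \<or> card H = p * q" using dvd_pq[OF p q] by blast
  moreover have "card H \<noteq> 1" using card1_triv[OF H(1)] H by blast
  moreover have "card H \<noteq> p * q" using card_full[OF H(1) fin] H ord by auto
  ultimately have cH: "card H = p \<or> card H = q" by blast
  show ?thesis
  proof (cases "p = q")
    case True
    then have cH': "card H = p" and ordp: "card (carrier G) = p ^ 2"
      using cH ord by (auto simp: order_def power2_eq_square)
    obtain x where "x \<in> carrier G - H" "x <# H #> inv x = H"
      using normalizer_grows[OF fin subgroup_self ordp p H(1) HG H(3)] by blast
    then have "x \<in> normalizer G H" "x \<notin> H" using normalizer_eq[OF HG] by auto
    then show ?thesis using NH by simp
  next
    case False
    from cH show ?thesis
    proof
      assume "card H = p"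
      then show ?thesis using bwd_core[OF fin ord p q False H(1) _ NH] by simp
    next
      assume "card H = q"
      then show ?thesis using bwd_core[OF fin _ q p _ H(1) _ NH] ord False by (simp add: mult.commute)
    qed
  qed
qed

end


lemma pne2: "Factorial_Ring.prime (p::nat) \<Longrightarrow> p \<noteq> p ^ 2"
  using prime_gt_1_nat by (metis power2_eq_square mult_cancel2 nat_neq_iff not_one_less_zero mult_1)

context group begin

lemma msq_normal:
  assumes fin: "finite (carrier G)" and ord: "order G = m ^ 2 * s"
    and m: "Factorial_Ring.prime m" and s: "Factorial_Ring.prime s" and ms: "m \<noteq> s"
    and X: "subgroup Xs G" "card Xs = s" "normalizer G Xs = Xs"
    and K: "subgroup K G" "card K = m ^ 2"
  shows "normalizer G K = carrier G"
proof -
  have m2: "m \<ge> 2" and s2: "s \<ge> 2" using m s prime_ge_2_nat by auto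
  have cls: "\<And>c. c \<in> subgroup_conj_class G Xs \<Longrightarrow> subgroup c G \<and> card c = s"
    using snc(2)[OF fin X(1,2) s X(3)] by blast
  define U where "U = \<Union>(subgroup_conj_class G Xs) - {\<one>}"
  have cU0: "card U * s = order G * (s - 1)" using snc(1)[OF fin X(1,2) s X(3)] U_def by simp
  have cU: "card U = m ^ 2 * (s - 1)"
  proof -
    have "card U * s = (m ^ 2 * (s - 1)) * s" using cU0 ord by (simp add: algebra_simps)
    then show ?thesis using s2 by simp
  qed
  have UG: "U \<subseteq> carrier G - {\<one>}" unfolding U_def using cls subgroup.subset by blast
  have key: "(K' - {\<one>}) \<inter> U = {}" if K'1: "subgroup K' G" and K'2: "card K' = m ^ 2" for K'
  proof -
    have "z = \<one>" if z1: "z \<in> K'" and z2: "z \<in> c" and c: "c \<in> subgroup_conj_class G Xs" for z c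
    proof -
      have cs: "subgroup c G" "card c = s" using cls[OF c] by auto
      have fc: "finite c" using cs fin subgroup.subset finite_subset by metis
      have fK': "finite K'" using K'1 fin subgroup.subset finite_subset by metis
      have si: "subgroup (K' \<inter> c) G" using subgroups_Inter_pair[OF K'1 cs(1)] .
      have "K' \<inter> c = {\<one>} \<or> K' \<inter> c = c" using subgroup_of_prime_order[OF si cs(1) _ cs(2) s fc] by blast
      moreover have "K' \<inter> c \<noteq> c"
      proof
        assume "K' \<inter> c = c"
        then have "c \<subseteq> K'" by blast
        then have "s dvd m ^ 2" using card_subgroup_dvd[OF cs(1) K'1 _ fK'] cs K'2 by simp
        then have "s dvd m" using prime_dvd_power_nat[OF s] by blast
        then show False using primes_dvd_imp_eq[OF s m] ms by simp
      qed
      ultimately have "K' \<inter> c = {\<one>}" by blast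
      then show ?thesis using z1 z2 by blast
    qed
    then show ?thesis unfolding U_def by blast
  qed
  have KG: "K \<subseteq> carrier G" using K subgroup.subset by blast
  have finK: "finite K" using KG fin finite_subset by blast
  have oneK: "\<one> \<in> K" using K subgroup.one_closed by blast
  have K1G: "K - {\<one>} \<subseteq> carrier G - {\<one>}" using KG by blast
  have cK1: "card (K - {\<one>}) = m ^ 2 - 1" using finK oneK K by simp
  have full: "U \<union> (K - {\<one>}) = carrier G - {\<one>}"
  proof (rule union_full[OF fin UG K1G])
    show "U \<inter> (K - {\<one>}) = {}" using key[OF K] by blast
    have "m ^ 2 * (s - 1) + (m ^ 2 - 1) = s * m ^ 2 - 1" using arith2[of s "m ^ 2"] m2 s2 by simp
    then show "card U + card (K - {\<one>}) = order G - 1" using cU cK1 ord by (simp add: mult.commute)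
  qed
  have "g \<in> normalizer G K" if g: "g \<in> carrier G" for g
  proof -
    define K' where "K' = g <# K #> inv g"
    have K'1: "subgroup K' G" using conj_sub[OF g K(1)] K'_def by simp
    have K'2: "card K' = m ^ 2" using card_conj[OF g KG] K K'_def by simp
    have K'G: "K' \<subseteq> carrier G" using K'1 subgroup.subset by blast
    have d: "(K' - {\<one>}) \<inter> U = {}" using key[OF K'1 K'2] .
    have "K' - {\<one>} \<subseteq> carrier G - {\<one>}" using K'G by blast
    then have "K' - {\<one>} \<subseteq> U \<union> (K - {\<one>})" using full by simp
    then have "K' - {\<one>} \<subseteq> K - {\<one>}" using d by blast
    then have "K' \<subseteq> K" using oneK by blast
    then have "K' = K" using card_subset_eq[OF finK] K'2 K by simp
    then show ?thesis using normalizer_eq[OF KG] g K'_def by simp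
  qed
  moreover have "normalizer G K \<subseteq> carrier G" using normalizer_eq[OF KG] by auto
  ultimately show ?thesis by blast
qed

lemma p2_comm:
  assumes fin: "finite (carrier G)" and ord: "order G = p ^ 2" and p: "Factorial_Ring.prime p"
    and D: "D_count G = 1"
  shows "comm_group G"
proof -
  have cG: "card (carrier G) = p ^ 2" using ord by (simp add: order_def)
  have Nfull: "normalizer G Xs = carrier G \<and> bad G Xs" if X1: "subgroup Xs G" and X2: "card Xs = p" for Xs
  proof -
    have XG: "Xs \<subseteq> carrier G" using X1 subgroup.subset by blast
    have finX: "finite Xs" using XG fin finite_subset by blast
    have Xne: "Xs \<noteq> carrier G" using X2 cG pne2[OF p] by auto
    have X1': "Xs \<noteq> {\<one>}" using card_prime_sub_ne1[OF X1 X2 p] .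
    have bX: "bad G Xs" using grows_bad[OF fin subgroup_self cG p X1 XG Xne X1'] .
    have Ns: "subgroup (normalizer G Xs) G" using normalizer_subgroup[OF X1] .
    have XN: "Xs \<subseteq> normalizer G Xs" using normalizer_sub[OF X1] .
    have fN: "finite (normalizer G Xs)" using Ns fin subgroup.subset finite_subset by blast
    have "card (normalizer G Xs) dvd p ^ 2" using card_subgroup_dvd_order[OF Ns fin] ord by simp
    then obtain i where i: "i \<le> 2" "card (normalizer G Xs) = p ^ i" using divides_primepow_nat[OF p] by blast
    have "card Xs \<le> card (normalizer G Xs)" using card_mono[OF fN XN] .
    then have "i \<noteq> 0"
    proof (rule contrapos_pn)
      assume "i = 0"
      then have "card (normalizer G Xs) = 1" using i by simp
      then show "\<not> card Xs \<le> card (normalizer G Xs)" using X2 prime_gt_1_nat[OF p] by simp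
    qed
    moreover have "i \<noteq> 1"
    proof
      assume "i = 1"
      then have "card (normalizer G Xs) = card Xs" using i X2 by simp
      then have "normalizer G Xs = Xs" using card_subset_eq[OF fN XN] by simp
      then show False using bX unfolding bad_def by simp
    qed
    ultimately have "i = 2" using i by linarith
    then have "normalizer G Xs = carrier G" using card_full[OF Ns fin] i ord by simp
    then show ?thesis using bX by simp
  qed
  obtain X0 where X0: "subgroup X0 G" "card X0 = p" using exists_subgroup_card[OF fin p, of 1] ord by auto
  have X0G: "X0 \<subseteq> carrier G" using X0 subgroup.subset by blast
  have uniq: "Xs = X0" if X1: "subgroup Xs G" and X2: "card Xs = p" for Xs
  proof -
    have "Xs \<in> subgroup_conj_class G X0" using D1_conj[OF D] Nfull[OF X0] Nfull[OF X1 X2] by blast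
    then obtain g where g: "g \<in> carrier G" "Xs = g <# X0 #> inv g" unfolding subgroup_conj_class_def by blast
    have "g \<in> normalizer G X0" using Nfull[OF X0] g by simp
    then show ?thesis using normalizer_eq[OF X0G] g by simp
  qed
  have "X0 \<noteq> carrier G" using X0 cG pne2[OF p] by auto
  then obtain y where y: "y \<in> carrier G" "y \<notin> X0" using X0G by blast
  have gs: "subgroup (generate G {y}) G" using generate_is_subgroup y by simp
  have yg: "y \<in> generate G {y}" by (simp add: generate.incl)
  have y1: "y \<noteq> \<one>" using y X0 subgroup.one_closed by blast
  have "card (generate G {y}) dvd p ^ 2" using card_subgroup_dvd_order[OF gs fin] ord by simp
  then obtain i where i: "i \<le> 2" "card (generate G {y}) = p ^ i" using divides_primepow_nat[OF p] by blast
  have "i \<noteq> 0"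
  proof
    assume "i = 0"
    then have "generate G {y} = {\<one>}" using i card1_triv[OF gs] by simp
    then show False using yg y1 by blast
  qed
  moreover have "i \<noteq> 1" using i uniq[OF gs] yg y by auto
  ultimately have "i = 2" using i by linarith
  then have "generate G {y} = carrier G" using card_full[OF gs fin] i ord by simp
  then show ?thesis using gen_comm y by blast
qed

end


context group begin

lemma nonab_fwd:
  assumes nc: "\<not> comm_group G" and fin: "finite (carrier G)" and D: "D_count G = 1"
  shows "frobenius_group G \<and> (\<exists>p q. Factorial_Ring.prime p \<and> Factorial_Ring.prime q \<and> order G = p * q)"
proof -
  obtain H0 where H0: "bad G H0" using D1_nonempty[OF D] by blast
  define m where "m = card H0"
  have bm: "card H = m" if bH: "bad G H" for H using D1_card[OF D H0 bH] m_def by simp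
  define n where "n = order G"
  have n1: "n \<noteq> 1" and np: "\<not> Factorial_Ring.prime n"
    using prime_order_comm[OF fin] nc n_def by auto
  have sq: "m = p" if p: "Factorial_Ring.prime p" and pd: "p ^ 2 dvd n" for p
  proof -
    obtain K where K: "subgroup K G" "card K = p ^ 2" using exists_subgroup_card[OF fin p] pd n_def by blast
    have finK: "finite K" using K fin subgroup.subset finite_subset by blast
    obtain Xs where X: "subgroup Xs G" "Xs \<subseteq> K" "card Xs = p ^ 1"
      using sub_subgroup_card[OF K(1) finK p, of 1] K by (auto simp: power2_eq_square)
    have "Xs \<noteq> K" using X K pne2[OF p] by auto
    moreover have "Xs \<noteq> {\<one>}" using card_prime_sub_ne1[OF X(1) _ p] X by simp
    ultimately have "bad G Xs" using grows_bad[OF fin K p X(1,2)] by blast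
    then show ?thesis using bm X by simp
  qed
  have cube: "\<not> p ^ 3 dvd n" if p: "Factorial_Ring.prime p" for p
  proof
    assume pd: "p ^ 3 dvd n"
    obtain L where L: "subgroup L G" "card L = p ^ 3" using exists_subgroup_card[OF fin p] pd n_def by blast
    have finL: "finite L" using L fin subgroup.subset finite_subset by blast
    have "p ^ 2 dvd p ^ 3" by (simp add: le_imp_power_dvd)
    then obtain K where K: "subgroup K G" "K \<subseteq> L" "card K = p ^ 2"
      using sub_subgroup_card[OF L(1) finL p, of 2] L by auto
    have p2: "p \<ge> 2" using p prime_ge_2_nat by auto
    have "p ^ 2 < p ^ 3" using p2 by (simp add: power_strict_increasing)
    then have "K \<noteq> L" using K L by auto
    moreover have "K \<noteq> {\<one>}"
    proof
      assume "K = {\<one>}"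
      then have "p ^ 2 = 1" using K by simp
      then show False using p2 by simp
    qed
    ultimately have "bad G K" using grows_bad[OF fin L p K(1,2)] by blast
    then have "m = p ^ 2" using bm K by simp
    moreover have "m = p" using sq[OF p] pd \<open>p ^ 2 dvd p ^ 3\<close> dvd_trans by blast
    ultimately show False using pne2[OF p] by simp
  qed
  have sn: "normalizer G Xs = Xs" if q: "Factorial_Ring.prime q" and qm: "q \<noteq> m"
    and X1: "subgroup Xs G" and X2: "card Xs = q" for q Xs
  proof (rule ccontr)
    assume "normalizer G Xs \<noteq> Xs"
    then have "bad G Xs" using X1 card_prime_sub_ne1[OF X1 X2 q] unfolding bad_def by blast
    then show False using bm X2 qm by simp
  qed
  have Xex: "\<exists>Xs. subgroup Xs G \<and> card Xs = q" if q: "Factorial_Ring.prime q" and qd: "q dvd n" for q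
    using exists_subgroup_card[OF fin q, of 1] qd n_def by simp
  have twop: False if p: "Factorial_Ring.prime p" and q: "Factorial_Ring.prime q" and pq: "p \<noteq> q"
    and pd: "p dvd n" and qd: "q dvd n" and pm: "p \<noteq> m" and qm: "q \<noteq> m" for p q
  proof -
    obtain Xp where Xp: "subgroup Xp G" "card Xp = p" using Xex[OF p pd] by blast
    obtain Xq where Xq: "subgroup Xq G" "card Xq = q" using Xex[OF q qd] by blast
    show False using two_sn[OF fin Xp p sn[OF p pm Xp] Xq q sn[OF q qm Xq] pq] .
  qed
  obtain p where p: "Factorial_Ring.prime p" "p dvd n" using prime_factor_nat[OF n1] by blast
  show ?thesis
  proof (cases "\<exists>q. Factorial_Ring.prime q \<and> q dvd n \<and> q \<noteq> p")
    case False
    then have allp: "t = p" if "Factorial_Ring.prime t" "t dvd n" for t using that by blast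
    obtain r where r: "n = p * r" using p by (auto elim: dvdE)
    have "r \<noteq> 1" using r np p by auto
    then obtain t where t: "Factorial_Ring.prime t" "t dvd r" using prime_factor_nat by blast
    then have "t = p" using allp[of t] r by simp
    then obtain s where s: "n = p ^ 2 * s" using t r by (auto elim!: dvdE simp: power2_eq_square mult.assoc)
    have "s = 1"
    proof (rule ccontr)
      assume "s \<noteq> 1"
      then obtain u where u: "Factorial_Ring.prime u" "u dvd s" using prime_factor_nat by blast
      then have "u = p" using allp[of u] s by simp
      then have "p ^ 3 dvd n" using u s by (auto elim!: dvdE simp: power2_eq_square power3_eq_cube mult.assoc)
      then show False using cube[OF p(1)] by simp
    qed
    then have "order G = p ^ 2" using s n_def by simp
    then have "comm_group G" using p2_comm[OF fin _ p(1) D] by simp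
    then show ?thesis using nc by simp
  next
    case True
    then obtain q where q: "Factorial_Ring.prime q" "q dvd n" "q \<noteq> p" by blast
    have mpq: "m = p \<or> m = q" using twop[OF p(1) q(1) q(3)[symmetric] p(2) q(2)] by blast
    obtain s where s: "Factorial_Ring.prime s" "s dvd n" "s \<noteq> m"
      and m: "Factorial_Ring.prime m" "m dvd n"
      using mpq p q by auto
    have allt: "t = m \<or> t = s" if t: "Factorial_Ring.prime t" "t dvd n" for t
      using twop[OF t(1) s(1) _ t(2) s(2) _ s(3)] by blast
    have nss: "\<not> s ^ 2 dvd n" using sq[OF s(1)] s(3) by auto
    have nm3: "\<not> m ^ 3 dvd n" using cube[OF m(1)] .
    obtain n' where n': "n = s * n'" using s(2) by (auto elim: dvdE)
    have "m dvd s * n'" using m n' by simp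
    moreover have "\<not> m dvd s" using primes_dvd_imp_eq[OF m(1) s(1)] s(3) by auto
    ultimately have "m dvd n'" using prime_dvd_mult_iff[OF m(1)] by blast
    then obtain r where r: "n = s * m * r" using n' by (auto elim: dvdE simp: mult.assoc)
    have sr: "\<not> s dvd r"
    proof
      assume "s dvd r"
      then have "s ^ 2 dvd n" using r by (auto elim!: dvdE simp: power2_eq_square mult.assoc)
      then show False using nss by simp
    qed
    have rcase: "r = 1 \<or> r = m"
    proof (rule ccontr)
      assume rr: "\<not> (r = 1 \<or> r = m)"
      then obtain t where t: "Factorial_Ring.prime t" "t dvd r" using prime_factor_nat by blast
      then have "t dvd n" using r by simp
      then have "t = m" using allt[OF t(1)] t sr by blast
      then obtain r' where r': "r = m * r'" using t by (auto elim: dvdE)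
      have "r' \<noteq> 1" using rr r' by auto
      then obtain u where u: "Factorial_Ring.prime u" "u dvd r'" using prime_factor_nat by blast
      then have "u dvd n" "u dvd r" using r r' by auto
      then have "u = m" using allt[OF u(1)] sr by blast
      then have "m ^ 3 dvd n" using u r r'
        by (auto elim!: dvdE simp: power3_eq_cube mult.assoc mult.left_commute)
      then show False using nm3 by simp
    qed
    obtain Xs where Xs: "subgroup Xs G" "card Xs = s" using Xex[OF s(1,2)] by blast
    have NX: "normalizer G Xs = Xs" using sn[OF s(1) s(3) Xs] .
    have ms: "m \<noteq> s" using s(3) by simp
    from rcase show ?thesis
    proof
      assume "r = m"
      then have ord: "order G = m ^ 2 * s" using r n_def by (simp add: power2_eq_square algebra_simps)
      obtain K where K: "subgroup K G" "card K = m ^ 2"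
        using exists_subgroup_card[OF fin m(1), of 2] ord by auto
      have NK: "normalizer G K = carrier G" using msq_normal[OF fin ord m(1) s(1) ms Xs NX K] .
      have m2: "m \<ge> 2" "s \<ge> 2" using m s prime_ge_2_nat by auto
      have "K \<noteq> {\<one>}"
      proof
        assume "K = {\<one>}"
        then have "m ^ 2 = 1" using K by simp
        then show False using m2 by simp
      qed
      moreover have "K \<noteq> carrier G"
      proof
        assume "K = carrier G"
        then have "m ^ 2 = m ^ 2 * s" using K ord by (simp add: order_def)
        then show False using m2 by simp
      qed
      ultimately have "bad G K" using K NK unfolding bad_def by simp
      then have "m ^ 2 = m" using bm K by simp
      then show ?thesis using pne2[OF m(1)] by simp
    next
      assume "r = 1"
      then have ord: "order G = m * s" using r n_def by simp
      have XG: "Xs \<subseteq> carrier G" using Xs subgroup.subset by blast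
      have finX: "finite Xs" using XG fin finite_subset by blast
      have fr: "frobenius_group G"
        unfolding frobenius_group_def
      proof (intro exI conjI ballI)
        show "subgroup Xs G" using Xs by simp
        show "Xs \<noteq> {\<one>}" using card_prime_sub_ne1[OF Xs s(1)] .
        show "Xs \<noteq> carrier G"
        proof
          assume "Xs = carrier G"
          then have "s = m * s" using Xs ord by (simp add: order_def)
          then show False using m s prime_ge_2_nat by (metis mult_cancel2 nat_neq_iff not_numeral_le_zero mult_1 numeral_le_one_iff semiring_norm(69))
        qed
        fix g assume g: "g \<in> carrier G - Xs"
        define c where "c = g <# Xs #> inv g"
        have gG: "g \<in> carrier G" using g by simp
        have c1: "subgroup c G" using conj_sub[OF gG Xs(1)] c_def by simp
        have c2: "card c = s" using card_conj[OF gG XG] Xs c_def by simp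
        have fc: "finite c" using c1 fin subgroup.subset finite_subset by blast
        have "Xs \<noteq> c"
        proof
          assume "Xs = c"
          then have "g \<in> normalizer G Xs" using normalizer_eq[OF XG] gG c_def by simp
          then show False using NX g by simp
        qed
        then show "Xs \<inter> (g <# Xs #> inv g) = {\<one>}"
          using prime_subgroups_inter[OF Xs(1) c1 Xs(2) c2 s(1) s(1) finX fc] c_def by simp
      qed
      then show ?thesis using ord m(1) s(1) by blast
    qed
  qed
qed

end


theorem mainTheorem4:
  fixes G :: "('a, 'b) monoid_scheme"
  assumes "group G" and "finite (carrier G)"
  shows "(comm_group G \<longrightarrow>
            (D_count G = 1 \<longleftrightarrow> cyclic_group G \<and> (\<exists>p::nat. Factorial_Ring.prime p \<and> order G = p ^ 2)))
       \<and> (\<not> comm_group G \<longrightarrow>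
            (D_count G = 1 \<longleftrightarrow> frobenius_group G \<and>
               (\<exists>p q::nat. Factorial_Ring.prime p \<and> Factorial_Ring.prime q \<and> order G = p * q)))"
proof -
  interpret group G by fact
  have A: "comm_group G \<longrightarrow>
            (D_count G = 1 \<longleftrightarrow> cyclic_group G \<and> (\<exists>p::nat. Factorial_Ring.prime p \<and> order G = p ^ 2))"
  proof
    assume c: "comm_group G"
    show "D_count G = 1 \<longleftrightarrow> cyclic_group G \<and> (\<exists>p::nat. Factorial_Ring.prime p \<and> order G = p ^ 2)"
      using abelian_fwd[OF c assms(2)] abelian_bwd[OF c assms(2)] by blast
  qed
  have B: "\<not> comm_group G \<longrightarrow>
            (D_count G = 1 \<longleftrightarrow> frobenius_group G \<and>
               (\<exists>p q::nat. Factorial_Ring.prime p \<and> Factorial_Ring.prime q \<and> order G = p * q))"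
  proof
    assume nc: "\<not> comm_group G"
    show "D_count G = 1 \<longleftrightarrow> frobenius_group G \<and>
               (\<exists>p q::nat. Factorial_Ring.prime p \<and> Factorial_Ring.prime q \<and> order G = p * q)"
      using nonab_fwd[OF nc assms(2)] nonab_bwd[OF nc assms(2)] by blast
  qed
  show ?thesis using A B by blast
qed

end
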